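(* If $M\in\mathcal{D}_2$, then the set $P$ of all isolated points of $M$ is discrete.
   Context: A function on an open convex set $C\subset\mathbb{R}^d$ is DC if it is the difference of two convex functions on $C$. $\mathcal{D}_2$ denotes the family consisting of $\varnothing$ together with all nonempty closed sets $A\subset\mathbb{R}^2$ whose distance function $d_A=\operatorname{dist}(\cdot,A)$ is DC on $\mathbb{R}^2$. A set $D\subset\mathbb{R}^2$ is discrete if each point of $\mathbb{R}^2$ has a neighbourhood containing at most one point of $D$. *)

theory Defs
  imports "HOL-Analysis.Analysis"
begin

definition DC_on :: "('a::real_normed_vector) set \<Rightarrow> ('a \<Rightarrow> real) \<Rightarrow> bool" where
  "DC_on C f \<longleftrightarrow> (\<exists>g h. convex_on C g \<and> convex_on C h \<and> (\<forall>x\<in>C. f x = g x - h x))"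

definition D2 :: "(real^2) set set" where
  "D2 = {A. A = {} \<or> (closed A \<and> DC_on UNIV (\<lambda>x. infdist x A))}"

definition isolated_points :: "('a::metric_space) set \<Rightarrow> 'a set" where
  "isolated_points M = {x\<in>M. \<exists>e>0. ball x e \<inter> M = {x}}"

definition discrete_set :: "('a::topological_space) set \<Rightarrow> bool" where
  "discrete_set D \<longleftrightarrow> (\<forall>z. \<exists>U. open U \<and> z \<in> U \<and> (\<forall>p\<in>U \<inter> D. \<forall>q\<in>U \<inter> D. p = q))"

end

theory Submission
  imports Defs
begin

lemma subgrad:
  fixes h :: "'a::euclidean_space \<Rightarrow> real"
  assumes "convex_on UNIV h"
  shows "\<exists>y. \<forall>x. h p + inner y (x - p) \<le> h x"
proof -
  let ?S = "epigraph UNIV h"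
  let ?T = "{p} \<times> {..<h p}"
  have cS: "convex ?S" using assms by (rule convex_epigraphI)
  have cT: "convex ?T" by (intro convex_Times) auto
  have "(p, h p) \<in> ?S" by (simp add: epigraph_def)
  hence nS: "?S \<noteq> {}" by blast
  have "(p, h p - 1) \<in> ?T" by simp
  hence nT: "?T \<noteq> {}" by blast
  have dj: "?S \<inter> ?T = {}" by (auto simp: epigraph_def)
  obtain a b where ab: "a \<noteq> 0" "\<forall>x\<in>?S. inner a x \<le> b" "\<forall>x\<in>?T. inner a x \<ge> b"
    using separating_hyperplane_sets[OF cS cT nS nT dj] by blast
  obtain a1 a0 where a: "a = (a1, a0)" by (cases a)
  have S': "inner a1 x + a0 * t \<le> b" if "h x \<le> t" for x t
    using ab(2) that a by (auto simp: epigraph_def inner_Pair)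
  have T': "inner a1 p + a0 * t \<ge> b" if "t < h p" for t
    using ab(3) that a by (auto simp: inner_Pair)
  have a0le: "a0 \<le> 0"
  proof (rule ccontr)
    assume "\<not> a0 \<le> 0"
    hence pos: "a0 > 0" by simp
    define t where "t = max (h p) ((b - inner a1 p) / a0) + 1"
    have "inner a1 p + a0 * t \<le> b" using S'[of p t] by (simp add: t_def)
    moreover have "a0 * t > b - inner a1 p"
    proof -
      have "t > (b - inner a1 p) / a0" unfolding t_def by linarith
      thus ?thesis using pos by (simp add: field_simps)
    qed
    ultimately show False by linarith
  qed
  have a0ne: "a0 \<noteq> 0"
  proof
    assume z: "a0 = 0"
    hence "a1 \<noteq> 0" using ab(1) a by (auto simp: zero_prod_def)
    have "inner a1 (p + a1) \<le> b" using S'[of "p + a1" "h (p + a1)"] z by simp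
    moreover have "inner a1 p \<ge> b" using T'[of "h p - 1"] z by simp
    ultimately have "inner a1 a1 \<le> 0" by (simp add: inner_add_right)
    thus False using \<open>a1 \<noteq> 0\<close> by (metis inner_gt_zero_iff not_le)
  qed
  hence neg: "a0 < 0" using a0le by simp
  have Tp: "inner a1 p + a0 * h p \<ge> b"
  proof (rule ccontr)
    assume nt: "\<not> inner a1 p + a0 * h p \<ge> b"
    define d where "d = b - (inner a1 p + a0 * h p)"
    have dpos: "d > 0" using nt by (simp add: d_def)
    have "d / (2 * a0) < 0" using dpos neg by (simp add: divide_pos_neg)
    hence "h p + d / (2 * a0) < h p" by simp
    from T'[OF this] have "inner a1 p + a0 * h p + d / 2 \<ge> b"
      using neg by (simp add: distrib_left)
    thus False using dpos unfolding d_def by (simp add: field_simps)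
  qed
  show ?thesis
  proof (intro exI allI)
    fix x
    have "inner a1 x + a0 * h x \<le> inner a1 p + a0 * h p"
      using S'[of x "h x"] Tp by simp
    hence "inner a1 (x - p) \<le> (- a0) * (h x - h p)" by (simp add: inner_diff_right algebra_simps)
    hence "inner a1 (x - p) / (- a0) \<le> h x - h p" using neg by (subst pos_divide_le_eq) (auto simp: mult.commute)
    moreover have "inner (- (1 / a0) *\<^sub>R a1) (x - p) = inner a1 (x - p) / (- a0)" by simp
    ultimately show "h p + inner (- (1 / a0) *\<^sub>R a1) (x - p) \<le> h x" by linarith
  qed
qed


lemma local_eq:
  fixes M :: "'a::real_normed_vector set"
  assumes "p \<in> M" "e > 0" "ball p e \<inter> M = {p}" "norm (x - p) < e / 2"
  shows "infdist x M = norm (x - p)"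
proof (rule antisym)
  show "infdist x M \<le> norm (x - p)" using infdist_le[OF assms(1), of x] by (simp add: dist_norm)
  have "norm (x - p) \<le> dist x a" if "a \<in> M" for a
  proof (cases "a = p")
    case True thus ?thesis by (simp add: dist_norm)
  next
    case False
    hence "a \<notin> ball p e" using assms(3) that by blast
    hence "dist p a \<ge> e" by simp
    moreover have "dist p a \<le> dist p x + dist x a" by (rule dist_triangle)
    moreover have "dist p x = norm (x - p)" by (simp add: dist_norm norm_minus_commute)
    ultimately show ?thesis using assms(4) by linarith
  qed
  hence lb: "\<forall>a\<in>M. norm (x - p) \<le> dist x a" by blast
  have ne: "M \<noteq> {}" using assms(1) by blast
  show "norm (x - p) \<le> infdist x M"
    unfolding infdist_notempty[OF ne] using ne lb by (intro cINF_greatest) auto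
qed

lemma key:
  fixes M :: "'a::euclidean_space set"
  assumes g: "convex_on UNIV g" and h: "convex_on UNIV h"
    and dc: "\<And>x. infdist x M = g x - h x"
    and "p \<in> M" "e > 0" "ball p e \<inter> M = {p}"
  shows "\<exists>y. \<forall>x. g p + inner y (x - p) + norm (x - p) \<le> g x"
proof -
  obtain y where y: "\<And>x. h p + inner y (x - p) \<le> h x" using subgrad[OF h] by blast
  have gp: "g p = h p" using dc[of p] assms(4) by simp
  have loc: "g p + inner y (x - p) + norm (x - p) \<le> g x" if "norm (x - p) < e / 2" for x
    using local_eq[OF assms(4-6) that] dc[of x] y[of x] gp by linarith
  show ?thesis
  proof (intro exI allI)
    fix x
    show "g p + inner y (x - p) + norm (x - p) \<le> g x"
    proof (cases "norm (x - p) < e / 2")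
      case True thus ?thesis by (rule loc)
    next
      case False
      hence np: "norm (x - p) > 0" using assms(5) by linarith
      define t where "t = e / (4 * norm (x - p))"
      have t0: "t > 0" using np assms(5) by (simp add: t_def)
      have t1: "t \<le> 1" using False np assms(5) by (simp add: t_def field_simps)
      define xt where "xt = (1 - t) *\<^sub>R p + t *\<^sub>R x"
      have xtp: "xt - p = t *\<^sub>R (x - p)" by (simp add: xt_def algebra_simps)
      have "norm (xt - p) = t * norm (x - p)" using t0 by (simp add: xtp)
      also have "\<dots> = e / 4" using np by (simp add: t_def)
      finally have "norm (xt - p) < e / 2" using assms(5) by simp
      from loc[OF this] have A: "g p + t * inner y (x - p) + t * norm (x - p) \<le> g xt"
        using t0 by (simp add: xtp)
      have B: "g xt \<le> (1 - t) * g p + t * g x"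
        unfolding xt_def by (rule convex_onD[OF g]) (use t0 t1 in auto)
      have "t * (g p + inner y (x - p) + norm (x - p)) \<le> t * g x"
        using A B by (simp add: algebra_simps)
      thus ?thesis using t0 by simp
    qed
  qed
qed

lemma sep:
  fixes p q y z :: "'a::euclidean_space"
  assumes "\<And>x. g p + inner y (x - p) + norm (x - p) \<le> g x"
    and "\<And>x. g q + inner z (x - q) + norm (x - q) \<le> g x"
    and "p \<noteq> q"
  shows "dist y z \<ge> 2"
proof -
  have 1: "g p + inner y (q - p) + norm (q - p) \<le> g q" by (rule assms(1))
  have 2: "g q + inner z (p - q) + norm (p - q) \<le> g p" by (rule assms(2))
  have e: "inner z (p - q) = - inner z (q - p)" by (simp add: inner_diff_right)
  have n: "norm (p - q) = norm (q - p)" by (rule norm_minus_commute)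
  have "2 * norm (q - p) \<le> inner (z - y) (q - p)"
    using 1 2 e n by (simp add: inner_diff_left)
  also have "\<dots> \<le> norm (z - y) * norm (q - p)" by (rule norm_cauchy_schwarz)
  finally have "2 * norm (q - p) \<le> norm (z - y) * norm (q - p)" .
  moreover have "norm (q - p) > 0" using assms(3) by simp
  ultimately have "2 \<le> norm (z - y)" by simp
  thus ?thesis by (simp add: dist_norm norm_minus_commute)
qed

lemma packing:
  fixes S :: "'a::euclidean_space set"
  assumes "S \<subseteq> cball 0 R" "\<And>u v. u \<in> S \<Longrightarrow> v \<in> S \<Longrightarrow> u \<noteq> v \<Longrightarrow> dist u v \<ge> 1"
  shows "finite S"
proof (rule ccontr)
  assume inf: "infinite S"
  have "\<forall>T. infinite T \<and> T \<subseteq> cball (0::'a) R \<longrightarrow> (\<exists>x \<in> cball 0 R. x islimpt T)"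
    using compact_eq_Bolzano_Weierstrass compact_cball by blast
  hence "\<exists>x \<in> cball 0 R. x islimpt S" using inf assms(1) by blast
  then obtain x where lim: "x islimpt S" by blast
  hence ap: "\<forall>e>0. \<exists>x'\<in>S. x' \<noteq> x \<and> dist x' x < e" by (simp add: islimpt_approachable)
  have "(1/2::real) > 0" by simp
  then obtain u where u: "u \<in> S" "u \<noteq> x" "dist u x < 1/2" using ap by blast
  have "dist u x > 0" using u by simp
  hence "min (1/2) (dist u x) > 0" by simp
  then obtain v where v: "v \<in> S" "v \<noteq> x" "dist v x < min (1/2) (dist u x)"
    using ap by blast
  have "u \<noteq> v" using v by auto
  hence "dist u v \<ge> 1" using assms(2) u v by blast
  moreover have "dist u v \<le> dist u x + dist v x" by (metis dist_commute dist_triangle)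
  ultimately show False using u v by linarith
qed

theorem corollary4p13:
  fixes M :: "(real^2) set"
  assumes "M \<in> D2"
  shows "discrete_set (isolated_points M)"
proof (cases "M = {}")
  case True
  thus ?thesis by (auto simp: discrete_set_def isolated_points_def)
next
  case False
  then obtain g h where g: "convex_on UNIV g" and h: "convex_on UNIV h"
    and dc: "\<And>x. infdist x M = g x - h x"
    using assms by (auto simp: D2_def DC_on_def)
  let ?P = "isolated_points M"
  have "\<forall>p\<in>?P. \<exists>y. \<forall>x. g p + inner y (x - p) + norm (x - p) \<le> g x"
  proof
    fix p assume "p \<in> ?P"
    then obtain e where pe: "p \<in> M" "e > 0" "ball p e \<inter> M = {p}"
      unfolding isolated_points_def by blast
    show "\<exists>y. \<forall>x. g p + inner y (x - p) + norm (x - p) \<le> g x"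
      by (rule key[OF g h dc pe])
  qed
  hence "\<exists>Y. \<forall>p\<in>?P. \<forall>x. g p + inner (Y p) (x - p) + norm (x - p) \<le> g x"
    by (rule bchoice)
  then obtain Y where Y0: "\<forall>p\<in>?P. \<forall>x. g p + inner (Y p) (x - p) + norm (x - p) \<le> g x" ..
  have Y: "\<And>p x. p \<in> ?P \<Longrightarrow> g p + inner (Y p) (x - p) + norm (x - p) \<le> g x"
    using Y0 by blast
  have cg: "continuous_on UNIV g" by (rule convex_on_continuous[OF open_UNIV g])
  show ?thesis unfolding discrete_set_def
  proof
    fix z :: "real^2"
    have "compact (g ` cball z 2)"
      by (rule compact_continuous_image[OF continuous_on_subset[OF cg] compact_cball]) auto
    hence "bounded (g ` cball z 2)" by (rule compact_imp_bounded)
    then obtain C where C0: "\<forall>y\<in>g ` cball z 2. norm y \<le> C" unfolding bounded_iff by blast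
    have C: "\<And>x. x \<in> cball z 2 \<Longrightarrow> norm (g x) \<le> C" using C0 by blast
    let ?B = "?P \<inter> ball z 1"
    have Ybd: "Y p \<in> cball 0 (2 * C)" if "p \<in> ?B" for p
    proof (cases "Y p = 0")
      case True
      have "norm (g z) \<le> C" using C[of z] by simp
      hence "0 \<le> 2 * C" by (smt (verit) norm_ge_zero)
      thus ?thesis using True by simp
    next
      case False
      define x where "x = p + (1 / norm (Y p)) *\<^sub>R Y p"
      have xp: "x - p = (1 / norm (Y p)) *\<^sub>R Y p" by (simp add: x_def)
      have nx: "norm (x - p) = 1" using False by (simp add: xp)
      have ix: "inner (Y p) (x - p) = norm (Y p)"
        using False by (simp add: xp power2_norm_eq_inner[symmetric] power2_eq_square)
      have "dist z x \<le> dist z p + dist p x" by (rule dist_triangle)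
      moreover have "dist p x = 1" using nx by (simp add: dist_norm norm_minus_commute)
      moreover have "dist z p < 1" using that by simp
      ultimately have "x \<in> cball z 2" by simp
      hence "norm (g x) \<le> C" by (rule C)
      moreover have "norm (g p) \<le> C" using that by (intro C) auto
      moreover have "g p + norm (Y p) + 1 \<le> g x" using Y[of p x] that ix nx by auto
      ultimately have "norm (Y p) \<le> 2 * C" unfolding real_norm_def by linarith
      thus ?thesis by simp
    qed
    have "finite (Y ` ?B)"
    proof (rule packing[of _ "2 * C"])
      show "Y ` ?B \<subseteq> cball 0 (2 * C)" using Ybd by blast
    next
      fix u v assume "u \<in> Y ` ?B" "v \<in> Y ` ?B" "u \<noteq> v"
      then obtain p q where "p \<in> ?B" "q \<in> ?B" "u = Y p" "v = Y q" "p \<noteq> q" by blast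
      hence "dist (Y p) (Y q) \<ge> 2" by (intro sep[of g p "Y p" q "Y q"] Y) auto
      thus "dist u v \<ge> 1" using \<open>u = Y p\<close> \<open>v = Y q\<close> by simp
    qed
    moreover have "inj_on Y ?B"
    proof (rule inj_onI)
      fix p q assume "p \<in> ?B" "q \<in> ?B" "Y p = Y q"
      show "p = q"
      proof (rule ccontr)
        assume "p \<noteq> q"
        hence "dist (Y p) (Y q) \<ge> 2" using \<open>p \<in> ?B\<close> \<open>q \<in> ?B\<close>
          by (intro sep[of g p "Y p" q "Y q"] Y) auto
        thus False using \<open>Y p = Y q\<close> by simp
      qed
    qed
    ultimately have fin: "finite ?B" by (rule finite_imageD)
    obtain d where d: "d > 0" "\<And>x. x \<in> ?B \<Longrightarrow> x \<noteq> z \<Longrightarrow> d \<le> dist z x"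
      using finite_set_avoid[OF fin, of z] by blast
    let ?U = "ball z (min d 1)"
    have allz: "\<forall>p\<in>?U \<inter> ?P. p = z"
    proof
      fix p assume p: "p \<in> ?U \<inter> ?P"
      hence "p \<in> ?B" by auto
      show "p = z"
      proof (rule ccontr)
        assume "p \<noteq> z"
        hence "d \<le> dist z p" using d(2) \<open>p \<in> ?B\<close> by blast
        thus False using p by simp
      qed
    qed
    have "\<forall>p\<in>?U \<inter> ?P. \<forall>q\<in>?U \<inter> ?P. p = q"
    proof (intro ballI)
      fix p q assume pq: "p \<in> ?U \<inter> ?P" "q \<in> ?U \<inter> ?P"
      have "p = z" using allz pq(1) by blast
      moreover have "q = z" using allz pq(2) by blast
      ultimately show "p = q" by simp
    qed
    moreover have "open ?U \<and> z \<in> ?U" using d(1) by auto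
    ultimately have "open ?U \<and> z \<in> ?U \<and> (\<forall>p\<in>?U \<inter> ?P. \<forall>q\<in>?U \<inter> ?P. p = q)" by blast
    thus "\<exists>U. open U \<and> z \<in> U \<and> (\<forall>p\<in>U \<inter> ?P. \<forall>q\<in>U \<inter> ?P. p = q)" by blast
  qed
qed

end
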